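(* For every even integer $q\ge2$ and all $t_1,t_2\in\mathbf{R}$, $$\sum_{m,n=0}^{q-1}e^{-\frac{4\pi imn}{q}}\,\vartheta_{\frac nq,\frac m2}\big(t_1,\tfrac{iq}2\big)\,\vartheta_{\frac nq,\frac m2}\big(-t_1,\tfrac{iq}2\big)\,\vartheta_{\frac mq,\frac n2}\big(t_2,\tfrac{iq}2\big)\,\vartheta_{\frac mq,\frac n2}\big(-t_2,\tfrac{iq}2\big)=q\,\vartheta\big(t_1,\tfrac{iq}2\big)^2\,\vartheta\big(t_2,\tfrac{iq}2\big)^2.$$
   Context: $\vartheta_{a,b}(z,\tau)=\sum_{m\in\mathbf{Z}}e^{\pi i(m+a)^2\tau+2\pi i(m+a)(z+b)}$ and $\vartheta=\vartheta_{0,0}$, for $z\in\mathbf{C}$, $\operatorname{Im}\tau>0$, $a,b\in\mathbf{R}$. *)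

theory Defs
  imports "HOL-Analysis.Analysis"
begin

text \<open>The series converges absolutely for Im tau > 0, so the unordered sum over Z is used.\<close>
definition theta_char :: "real \<Rightarrow> real \<Rightarrow> complex \<Rightarrow> complex \<Rightarrow> complex" where
  "theta_char a b z \<tau> =
     (\<Sum>\<^sub>\<infinity>m::int. exp (pi * \<i> * (of_int m + of_real a)^2 * \<tau>
                      + 2 * pi * \<i> * (of_int m + of_real a) * (z + of_real b)))"

definition theta :: "complex \<Rightarrow> complex \<Rightarrow> complex" where
  "theta z \<tau> = theta_char 0 0 z \<tau>"

end

theory Submission
  imports Defs "HOL-Probability.Probability"
begin


lemma gauss_ft_lborel:
  fixes T k :: real assumes T: "T > 0"
  shows "integrable lborel (\<lambda>y. complex_of_real (exp (- pi * T * y^2)) * exp (2 * pi * \<i> * k * y))"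
    and "(\<integral>y. complex_of_real (exp (- pi * T * y^2)) * exp (2 * pi * \<i> * k * y) \<partial>lborel)
          = complex_of_real (exp (- pi * k^2 / T) / sqrt T)"
proof -
  define c where "c = sqrt (2 * pi * T)"
  have c: "c > 0" using T unfolding c_def by simp
  define t where "t = 2 * pi * k / c"
  define \<phi> where "\<phi> = (\<lambda>x. std_normal_density x *\<^sub>R iexp (t * x))"
  have int\<phi>: "integrable lborel \<phi>"
    unfolding \<phi>_def
    by (rule Bochner_Integration.integrable_bound[where f = std_normal_density])
       (auto simp: norm_mult integrable_std_normal_moment[of 0, simplified] 
             intro!: borel_measurable_continuous_onI continuous_intros )
  have "char std_normal_distribution t = integral\<^sup>L lborel \<phi>"
    unfolding char_def \<phi>_def
    by (subst integral_density) (auto intro!: borel_measurable_continuous_onI continuous_intros)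
  hence eq1: "integral\<^sup>L lborel \<phi> = exp (- (t^2) / 2)"
    using char_std_normal_distribution by (metis)
  have eq2: "integral\<^sup>L lborel \<phi> = c *\<^sub>R (\<integral>y. \<phi> (0 + c * y) \<partial>lborel)"
    using lborel_integral_real_affine[of c \<phi> 0] c by simp
  have fx: "\<phi> (0 + c * y) = (sqrt T) *\<^sub>R (complex_of_real (exp (- pi * T * y^2)) * exp (2 * pi * \<i> * k * y)) / c" for y
  proof -
    have h1: "std_normal_density (c*y) = (1 / sqrt (2 * pi)) * exp (- pi * T * y^2)"
      unfolding std_normal_density_def c_def using T
      by (simp add: power_mult_distrib real_sqrt_mult)
    have h2: "iexp (t * (c * y)) = exp (2 * pi * \<i> * k * y)"
      unfolding t_def using c by (simp add: field_simps)
    have "sqrt T / c = 1 / sqrt (2*pi)" unfolding c_def using T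
      by (simp add: real_sqrt_mult field_simps)
    then have e3: "complex_of_real (sqrt T) / complex_of_real c = 1 / complex_of_real (sqrt (2*pi))"
      by (metis of_real_divide of_real_1)
    have "\<And>A::complex. complex_of_real (sqrt T) * A / complex_of_real c = A / complex_of_real (sqrt (2*pi))"
      proof -
      fix A :: complex
      have "complex_of_real (sqrt T) * A / complex_of_real c = A * (complex_of_real (sqrt T) / complex_of_real c)"
        by (metis mult.commute times_divide_eq_right)
      also have "\<dots> = A / complex_of_real (sqrt (2*pi))" using e3 by simp
      finally show "complex_of_real (sqrt T) * A / complex_of_real c = A / complex_of_real (sqrt (2*pi))" .
    qed
    with h1 h2 show ?thesis unfolding \<phi>_def
      by (simp add: scaleR_conv_of_real) 
  qed
  show int: "integrable lborel (\<lambda>y. complex_of_real (exp (- pi * T * y^2)) * exp (2 * pi * \<i> * k * y))"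
  proof -
    have "integrable lborel (\<lambda>y. \<phi> (0 + c * y))"
      using lborel_integrable_real_affine[OF int\<phi>, of c 0] c by simp
    hence "integrable lborel (\<lambda>y. (c / sqrt T) *\<^sub>R \<phi> (0 + c * y))" by simp
    moreover have "(\<lambda>y. (c / sqrt T) *\<^sub>R \<phi> (0 + c * y)) = (\<lambda>y. complex_of_real (exp (- pi * T * y^2)) * exp (2 * pi * \<i> * k * y))"
    proof (rule ext)
      fix y
      have "(c / sqrt T) *\<^sub>R \<phi> (0 + c * y) = (c / sqrt T) *\<^sub>R ((sqrt T) *\<^sub>R (complex_of_real (exp (- pi * T * y^2)) * exp (2 * pi * \<i> * k * y)) / c)"
        by (simp only: fx)
      also have "\<dots> = complex_of_real (exp (- pi * T * y^2)) * exp (2 * pi * \<i> * k * y)"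
        using T c by (simp add: scaleR_conv_of_real)
      finally show "(c / sqrt T) *\<^sub>R \<phi> (0 + c * y) = complex_of_real (exp (- pi * T * y^2)) * exp (2 * pi * \<i> * k * y)" .
    qed
    ultimately show ?thesis by simp
  qed
  have "exp (- (t^2) / 2) = c *\<^sub>R (\<integral>y. (sqrt T / c) *\<^sub>R (complex_of_real (exp (- pi * T * y^2)) * exp (2 * pi * \<i> * k * y)) \<partial>lborel)"
    using eq1 eq2 fx by (simp add: scaleR_conv_of_real)
  also have "\<dots> = sqrt T *\<^sub>R (\<integral>y. (complex_of_real (exp (- pi * T * y^2)) * exp (2 * pi * \<i> * k * y)) \<partial>lborel)"
    using c by simp
  finally have "(\<integral>y. (complex_of_real (exp (- pi * T * y^2)) * exp (2 * pi * \<i> * k * y)) \<partial>lborel)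
      = exp (- (t^2) / 2) / sqrt T"
    using T by (simp add: scaleR_conv_of_real field_simps)
  moreover have "t^2/2 = pi * k^2 / T" unfolding t_def c_def using T
    by (simp add: power_divide power_mult_distrib field_simps power2_eq_square)
  ultimately show "(\<integral>y. complex_of_real (exp (- pi * T * y^2)) * exp (2 * pi * \<i> * k * y) \<partial>lborel)
          = complex_of_real (exp (- pi * k^2 / T) / sqrt T)" by simp
qed




definition tp :: "(complex \<times> int) list \<Rightarrow> real \<Rightarrow> complex" where
  "tp L x = sum_list (map (\<lambda>(c,k). c * exp (2 * pi * \<i> * of_int k * x)) L)"

lemma tp_Nil [simp]: "tp [] x = 0" by (simp add: tp_def)
lemma tp_Cons [simp]: "tp ((c,k) # L) x = c * exp (2 * pi * \<i> * of_int k * x) + tp L x"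
  by (simp add: tp_def)
lemma tp_append: "tp (L1 @ L2) x = tp L1 x + tp L2 x" by (simp add: tp_def)

definition tpmul :: "(complex \<times> int) list \<Rightarrow> (complex \<times> int) list \<Rightarrow> (complex \<times> int) list" where
  "tpmul L1 L2 = concat (map (\<lambda>(c1,k1). map (\<lambda>(c2,k2). (c1*c2, k1+k2)) L2) L1)"

lemma tp_single_mult: "tp (map (\<lambda>(c2,k2). (c1*c2, k1+k2)) L2) x = c1 * exp (2 * pi * \<i> * of_int k1 * x) * tp L2 x"
proof (induction L2)
  case Nil then show ?case by simp
next
  case (Cons a L2)
  obtain c k where a: "a = (c,k)" by force
  have "exp (2 * pi * \<i> * of_int (k1 + k) * x) = exp (2 * pi * \<i> * of_int k1 * x) * exp (2 * pi * \<i> * of_int k * x)"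
    by (simp add: distrib_left distrib_right exp_add)
  then show ?case using Cons by (simp add: a algebra_simps)
qed

lemma tp_tpmul: "tp (tpmul L1 L2) x = tp L1 x * tp L2 x"
proof (induction L1)
  case Nil then show ?case by (simp add: tpmul_def)
next
  case (Cons a L1)
  obtain c k where a: "a = (c,k)" by force
  have "tp (tpmul (a # L1) L2) x = tp (map (\<lambda>(c2,k2). (c*c2, k+k2)) L2) x + tp (tpmul L1 L2) x"
    by (simp add: tpmul_def a tp_append)
  also have "\<dots> = c * exp (2 * pi * \<i> * of_int k * x) * tp L2 x + tp L1 x * tp L2 x"
    by (simp only: tp_single_mult Cons.IH)
  finally show ?case by (simp add: a algebra_simps)
qed

lemma alg4: "(E + E') / 2 * a + (E - E') / (2 * \<i>) * b
   = a/2 * E + (a/2 * E' + (b/(2*\<i>) * E + (-b/(2*\<i>) * E' + 0)))" for E E' a b :: complex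
  by (simp add: field_simps)

lemma cis_poly_tp:
  assumes "real_polynomial_function g"
  shows "\<exists>L. \<forall>x. complex_of_real (g (exp (2 * pi * \<i> * x))) = tp L x"
  using assms
proof (induction g rule: real_polynomial_function.induct)
  case (linear g)
  have gz: "g z = Re z * g 1 + Im z * g \<i>" for z
  proof -
    have "z = Re z *\<^sub>R 1 + Im z *\<^sub>R \<i>" by (simp add: complex_eq_iff)
    hence "g z = g (Re z *\<^sub>R 1 + Im z *\<^sub>R \<i>)" by simp
    also have "\<dots> = Re z * g 1 + Im z * g \<i>"
    proof -
      interpret bounded_linear g by fact
      show ?thesis by (simp add: add scaleR)
    qed
    finally show ?thesis .
  qed
  define a where "a = complex_of_real (g 1)"
  define b where "b = complex_of_real (g \<i>)"
  let ?L = "[(a/2, 1), (a/2, -1), (b/(2*\<i>), 1), (-b/(2*\<i>), -1)]"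
  have "complex_of_real (g (exp (2 * pi * \<i> * x))) = tp ?L x" for x
  proof -
    have e: "exp (2 * pi * \<i> * x) = cis (2*pi*x)" by (simp add: cis_conv_exp mult_ac)
    have c: "complex_of_real (cos (2*pi*x)) = (exp (2 * pi * \<i> * of_int 1 * x) + exp (2 * pi * \<i> * of_int (-1) * x)) / 2"
      by (simp add: cos_of_real[symmetric] cos_exp_eq mult_ac)
    have s: "complex_of_real (sin (2*pi*x)) = (exp (2 * pi * \<i> * of_int 1 * x) - exp (2 * pi * \<i> * of_int (-1) * x)) / (2*\<i>)"
      by (simp add: sin_of_real[symmetric] sin_exp_eq mult_ac)
    have "complex_of_real (g (exp (2 * pi * \<i> * x))) = complex_of_real (cos (2*pi*x)) * a + complex_of_real (sin (2*pi*x)) * b"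
      unfolding e gz[of "cis (2*pi*x)"] a_def b_def by simp
    also have "\<dots> = tp ?L x" unfolding c s tp_Cons tp_Nil
      by (rule alg4)
    finally show ?thesis .
  qed
  then show ?case by blast
next
  case (const c)
  have "complex_of_real c = tp [(of_real c, 0)] x" for x by simp
  then show ?case by blast
next
  case (add f g)
  then obtain L1 L2 where "\<forall>x. complex_of_real (f (exp (2 * pi * \<i> * x))) = tp L1 x"
     "\<forall>x. complex_of_real (g (exp (2 * pi * \<i> * x))) = tp L2 x" by blast
  then have "\<forall>x. complex_of_real (f (exp (2 * pi * \<i> * x)) + g (exp (2 * pi * \<i> * x))) = tp (L1 @ L2) x"
    by (simp add: tp_append)
  then show ?case by blast
next
  case (mult f g)
  then obtain L1 L2 where "\<forall>x. complex_of_real (f (exp (2 * pi * \<i> * x))) = tp L1 x"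
     "\<forall>x. complex_of_real (g (exp (2 * pi * \<i> * x))) = tp L2 x" by blast
  then have "\<forall>x. complex_of_real (f (exp (2 * pi * \<i> * x)) * g (exp (2 * pi * \<i> * x))) = tp (tpmul L1 L2) x"
    by (simp add: tp_tpmul)
  then show ?case by blast
qed

lemma continuous_tp: "continuous_on S (tp L)"
proof (induction L)
  case Nil then show ?case by (simp add: tp_def)
next
  case (Cons a L)
  obtain c k where a: "a = (c,k)" by force
  have "tp (a # L) = (\<lambda>x. c * exp (2 * pi * \<i> * of_int k * x) + tp L x)" by (simp add: a fun_eq_iff)
  then show ?case using Cons by (auto intro!: continuous_intros)
qed

lemma integral_tp_zero:
  fixes d :: "real \<Rightarrow> real"
  assumes cont: "continuous_on UNIV d"
    and coef: "\<And>k::int. integral {0..1} (\<lambda>x. complex_of_real (d x) * exp (2*pi*\<i>* of_int k*x)) = 0"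
  shows "integral {0..1} (\<lambda>x. complex_of_real (d x) * tp L x) = 0"
proof (induction L)
  case Nil then show ?case by simp
next
  case (Cons a L)
  obtain c k where a: "a = (c,k)" by force
  have cd: "continuous_on {0..1} (\<lambda>x. complex_of_real (d x))"
    by (intro continuous_intros continuous_on_subset[OF cont]) auto
  have i1: "(\<lambda>x. complex_of_real (d x) * (c * exp (2*pi*\<i>* of_int k*x))) integrable_on {0..1}"
    by (intro integrable_continuous_real continuous_intros cd)
  have i2: "(\<lambda>x. complex_of_real (d x) * tp L x) integrable_on {0..1}"
    by (intro integrable_continuous_real continuous_intros cd continuous_tp)
  have i3: "(\<lambda>x. complex_of_real (d x) * exp (2*pi*\<i>* of_int k*x)) integrable_on {0..1}"
    by (intro integrable_continuous_real continuous_intros cd)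
  have "integral {0..1} (\<lambda>x. complex_of_real (d x) * tp (a#L) x)
      = integral {0..1} (\<lambda>x. complex_of_real (d x) * (c * exp (2*pi*\<i>* of_int k*x)) + complex_of_real (d x) * tp L x)"
    by (simp add: a distrib_left)
  also have "\<dots> = integral {0..1} (\<lambda>x. complex_of_real (d x) * (c * exp (2*pi*\<i>* of_int k*x))) + integral {0..1} (\<lambda>x. complex_of_real (d x) * tp L x)"
    by (rule integral_add[OF i1 i2])
  also have "integral {0..1} (\<lambda>x. complex_of_real (d x) * (c * exp (2*pi*\<i>* of_int k*x)))
      = integral {0..1} ((\<lambda>y. c * y) \<circ> (\<lambda>x. complex_of_real (d x) * exp (2*pi*\<i>* of_int k*x)))"
    by (simp add: o_def mult_ac)
  also have "\<dots> = c * integral {0..1} (\<lambda>x. complex_of_real (d x) * exp (2*pi*\<i>* of_int k*x))"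
    by (rule integral_linear[OF i3 bounded_linear_mult_right])
  finally show ?case using Cons coef by simp
qed

lemma fourier_unique:
  fixes d :: "real \<Rightarrow> real"
  assumes cont: "continuous_on UNIV d" and per: "\<And>x. d (x+1) = d x"
    and coef: "\<And>k::int. integral {0..1} (\<lambda>x. complex_of_real (d x) * exp (2*pi*\<i>* of_int k*x)) = 0"
    and x: "x \<in> {0..1}"
  shows "d x = 0"
proof -
  have perZ: "d (y + of_int n) = d y" for y n
  proof (induction n rule: int_induct[where k=0])
    case base then show ?case by simp
  next
    case (step1 i) then show ?case using per[of "y + of_int i"] by (simp add: add_ac)
  next
    case (step2 i) then show ?case using per[of "y + of_int (i - 1)"] by (simp add: add_ac)
  qed
  have dc: "isCont d y" for y using cont by (simp add: continuous_on_eq_continuous_at)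
  define D where "D z = d (Im (Ln z) / (2*pi))" for z
  have D2: "D z = d (Im (Ln (-z)) / (2*pi) + 1/2)" if z: "z \<noteq> 0" for z
  proof -
    have "exp (Ln (-z)) = exp (Ln z + \<i> * pi)" using z by (simp add: exp_add)
    then obtain n :: int where n: "Ln (-z) = Ln z + \<i> * pi + of_int (2 * n) * pi * \<i>"
      unfolding exp_eq by blast
    have "Im (Ln (-z)) = Im (Ln z) + pi + 2 * n * pi" using arg_cong[OF n, of Im] by simp
    hence "Im (Ln (-z)) / (2*pi) + 1/2 = Im (Ln z) / (2*pi) + of_int (n + 1)"
      by (simp add: field_simps)
    thus ?thesis unfolding D_def using perZ[of "Im (Ln z) / (2*pi)" "n+1"] by simp
  qed
  have contD: "continuous_on (sphere 0 1) D"
  proof (rule continuous_at_imp_continuous_on, rule ballI)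
    fix z :: complex assume "z \<in> sphere 0 1"
    hence z0: "z \<noteq> 0" by auto
    show "isCont D z"
    proof (cases "z \<in> \<real>\<^sub>\<le>\<^sub>0")
      case False
      have l: "isCont Ln z" by (rule continuous_at_Ln[OF False])
      have "isCont (\<lambda>z. Im (Ln z) / (2*pi)) z"
        by (rule isCont_o2[OF l]) (auto intro!: continuous_intros)
      from isCont_o2[OF this dc] show ?thesis unfolding D_def .
    next
      case True
      have "-z \<notin> \<real>\<^sub>\<le>\<^sub>0" using True z0
        by (auto simp: nonpos_Reals_def) 
      hence l: "isCont Ln (-z)" by (rule continuous_at_Ln)
      have "isCont (\<lambda>z. Ln (-z)) z" by (rule isCont_o2[where f="\<lambda>z. -z" and g=Ln, OF _ l]) (intro continuous_intros)
      hence "isCont (\<lambda>z. Im (Ln (-z)) / (2*pi) + 1/2) z"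
        by (auto intro!: continuous_intros) 
      from isCont_o2[OF this dc] have "isCont (\<lambda>z. d (Im (Ln (-z)) / (2*pi) + 1/2)) z" .
      moreover have "eventually (\<lambda>w. D w = d (Im (Ln (-w)) / (2*pi) + 1/2)) (nhds z)"
      proof -
        have "eventually (\<lambda>w. w \<noteq> 0) (nhds z)"
          using eventually_nhds_in_open[of "-{0}" z] z0 by (simp add: open_Compl)
        thus ?thesis by (rule eventually_mono) (rule D2)
      qed
      ultimately show ?thesis using isCont_cong[of D "\<lambda>w. d (Im (Ln (- w)) / (2 * pi) + 1 / 2)" z] by simp
    qed
  qed
  have Dcis: "D (exp (2 * pi * \<i> * y)) = d y" for y :: real
  proof -
    have "exp (Ln (exp (2 * pi * \<i> * y))) = exp (2 * pi * \<i> * y)" by simp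
    then obtain n :: int where n: "Ln (exp (2 * pi * \<i> * y)) = 2 * pi * \<i> * y + of_int (2 * n) * pi * \<i>"
      unfolding exp_eq by blast
    have "Im (Ln (exp (2 * pi * \<i> * y))) / (2*pi) = y + of_int n" 
      using arg_cong[OF n, of Im] by (simp add: field_simps)
    thus ?thesis unfolding D_def by (simp add: perZ)
  qed
  have cis_sphere: "exp (2 * pi * \<i> * y) \<in> sphere 0 1" for y :: real
    by (simp add: norm_exp_eq_Re)
  have cd: "continuous_on {0..1} d" using cont by (rule continuous_on_subset) auto
  have idd: "(\<lambda>x. d x * d x) integrable_on {0..1}"
    by (intro integrable_continuous_real continuous_intros cd)
  have iabs: "(\<lambda>x. \<bar>d x\<bar>) integrable_on {0..1}"
    by (intro integrable_continuous_real continuous_intros cd)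
  define C where "C = integral {0..1} (\<lambda>x. \<bar>d x\<bar>)"
  have bound: "integral {0..1} (\<lambda>x. d x * d x) \<le> e * C" if e: "e > 0" for e
  proof -
    obtain g where g: "real_polynomial_function g" "\<And>z. z \<in> sphere 0 1 \<Longrightarrow> \<bar>D z - g z\<bar> < e"
      using Stone_Weierstrass_real_polynomial_function[OF compact_sphere contD e] by blast
    obtain L where L: "\<And>x. complex_of_real (g (exp (2 * pi * \<i> * x))) = tp L x"
      using cis_poly_tp[OF g(1)] by blast
    define p where "p x = g (exp (2 * pi * \<i> * x))" for x :: real
    have cp: "continuous_on {0..1} p" unfolding p_def
      by (intro continuous_at_imp_continuous_on ballI isCont_o2[OF _ continuous_real_polymonial_function[OF g(1)]] continuous_intros)
    have idp: "(\<lambda>x. d x * p x) integrable_on {0..1}"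
      by (intro integrable_continuous_real continuous_intros cd cp)
    have idp2: "(\<lambda>x. d x * (d x - p x)) integrable_on {0..1}"
      by (intro integrable_continuous_real continuous_intros cd cp)
    have "complex_of_real (integral {0..1} (\<lambda>x. d x * p x)) = integral {0..1} (of_real \<circ> (\<lambda>x. d x * p x))"
      by (rule integral_linear[OF idp bounded_linear_of_real, symmetric])
    also have "\<dots> = integral {0..1} (\<lambda>x. complex_of_real (d x) * tp L x)"
      by (simp add: o_def p_def L[symmetric])
    also have "\<dots> = 0" by (rule integral_tp_zero[OF cont coef])
    finally have z: "integral {0..1} (\<lambda>x. d x * p x) = 0" by simp
    have "integral {0..1} (\<lambda>x. d x * d x) = integral {0..1} (\<lambda>x. d x * (d x - p x))"
      using integral_diff[OF idd idp] z by (simp add: right_diff_distrib)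
    also have "\<dots> \<le> integral {0..1} (\<lambda>x. e * \<bar>d x\<bar>)"
    proof (rule integral_le[OF idp2])
      show "(\<lambda>x. e * \<bar>d x\<bar>) integrable_on {0..1}"
        by (intro integrable_continuous_real continuous_intros cd)
      fix y :: real assume "y \<in> {0..1}"
      have "\<bar>d y - p y\<bar> < e" using g(2)[OF cis_sphere[of y]] Dcis[of y] unfolding p_def by simp
      hence "\<bar>d y\<bar> * \<bar>d y - p y\<bar> \<le> \<bar>d y\<bar> * e"
        by (intro mult_left_mono) auto
      moreover have "d y * (d y - p y) \<le> \<bar>d y\<bar> * \<bar>d y - p y\<bar>"
        by (metis abs_ge_self abs_mult)
      ultimately have "d y * (d y - p y) \<le> \<bar>d y\<bar> * e" by linarith
      thus "d y * (d y - p y) \<le> e * \<bar>d y\<bar>" by (simp add: mult_ac)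
    qed
    also have "\<dots> = e * C" unfolding C_def using integral_mult[OF iabs, of e] by simp
    finally show ?thesis .
  qed
  have C0: "C \<ge> 0" unfolding C_def by (intro integral_nonneg iabs) auto
  have le0: "integral {0..1} (\<lambda>x. d x * d x) \<le> 0"
  proof (rule ccontr)
    assume "\<not> ?thesis"
    hence pos: "integral {0..1} (\<lambda>x. d x * d x) > 0" by simp
    define e where "e = integral {0..1} (\<lambda>x. d x * d x) / (C + 1)"
    have e: "e > 0" unfolding e_def using pos C0 by simp
    have "e * C < e * (C + 1)" using e by simp
    also have "\<dots> = integral {0..1} (\<lambda>x. d x * d x)" unfolding e_def using C0 by simp
    finally show False using bound[OF e] by simp
  qed
  have ge0: "integral {0..1} (\<lambda>x. d x * d x) \<ge> 0" by (intro integral_nonneg idd) auto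
  have "((\<lambda>x. d x * d x) has_integral 0) (cbox 0 1)"
    using le0 ge0 idd by (simp add: has_integral_iff)
  hence "d x * d x = 0"
    by (rule has_integral_0_cbox_imp_0[rotated 2]) (use x cd in \<open>auto intro!: continuous_intros\<close>)
  thus ?thesis by simp
qed




lemma gauss_nat_bound:
  fixes c x R :: real and i :: nat
  assumes c: "c > 0" and R: "\<bar>x\<bar> \<le> R"
  shows "exp (- c * (real i + x)^2) \<le> exp (c * R^2) * exp (- c / 2) ^ i"
proof -
  have i2: "real i \<le> (real i)^2" by (cases i) (auto simp: power2_eq_square)
  have a: "(real i)^2 \<le> 2 * (real i + x)^2 + 2 * x^2"
    using sum_squares_ge_zero[of "real i + 2 * x" 0] by (simp add: power2_eq_square algebra_simps)
  have "x^2 \<le> R^2" using R by (metis abs_ge_zero abs_le_square_iff power2_abs abs_of_nonneg order_trans)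
  hence "real i / 2 - R^2 \<le> (real i + x)^2" using a i2 by linarith
  hence "c * (real i / 2 - R^2) \<le> c * (real i + x)^2" using c by (intro mult_left_mono) auto
  hence "- c * (real i + x)^2 \<le> c * R^2 + real i * (- c / 2)" by (simp add: algebra_simps)
  hence "exp (- c * (real i + x)^2) \<le> exp (c * R^2 + real i * (- c / 2))" by simp
  also have "\<dots> = exp (c * R^2) * exp (- c / 2) ^ i" by (simp only: exp_add exp_of_nat_mult)
  finally show ?thesis .
qed

lemma summable_gauss_nat:
  fixes c x :: real assumes c: "c > 0"
  shows "summable (\<lambda>i::nat. exp (- c * (real i + x)^2))"
proof -
  have geo: "summable (\<lambda>n. exp (c * \<bar>x\<bar>^2) * exp (- c / 2) ^ n)"
    by (intro summable_mult summable_geometric) (use c in simp)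
  show ?thesis
  proof (rule summable_comparison_test[OF _ geo])
  show "\<exists>N. \<forall>n\<ge>N. norm (exp (- c * (real n + x)^2)) \<le> exp (c * \<bar>x\<bar>^2) * exp (- c / 2) ^ n"
    using gauss_nat_bound[OF c, of x "\<bar>x\<bar>"] by auto
  qed
qed

lemma has_sum_int_split:
  fixes f :: "int \<Rightarrow> 'a::{topological_comm_monoid_add, t2_space}"
  assumes "((\<lambda>i. f (int i)) has_sum a) UNIV" "((\<lambda>i. f (- int i - 1)) has_sum b) UNIV"
  shows "(f has_sum (a + b)) UNIV"
proof -
  have 1: "(f has_sum a) (range int)"
    using assms(1) by (subst has_sum_reindex) (auto simp: o_def)
  have 2: "(f has_sum b) (range (\<lambda>i. - int i - 1))"
    using assms(2) by (subst has_sum_reindex) (auto simp: o_def inj_on_def)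
  have "(f has_sum (a + b)) (range int \<union> range (\<lambda>i. - int i - 1))"
    by (rule has_sum_Un_disjoint[OF 1 2]) auto
  also have "range int \<union> range (\<lambda>i. - int i - 1) = UNIV"
  proof -
    have "k \<in> range int \<union> range (\<lambda>i. - int i - 1)" for k :: int
    proof (cases "k \<ge> 0")
      case True then show ?thesis by (auto intro!: image_eqI[of _ _ "nat k"])
    next
      case False then show ?thesis by (auto intro!: image_eqI[of _ _ "nat (- k - 1)"])
    qed
    thus ?thesis by auto
  qed
  finally show ?thesis .
qed

definition gau :: "real \<Rightarrow> real \<Rightarrow> real" where "gau T y = exp (- pi * T * y^2)"

lemma gau_nonneg: "gau T y \<ge> 0" by (simp add: gau_def)

lemma gau_neg_shift: "gau T (x - real i - 1) = exp (- (pi * T) * (real i + (1 - x))^2)"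
  unfolding gau_def by (simp add: power2_eq_square algebra_simps)

lemma gau_pos_shift: "gau T (real i + x) = exp (- (pi * T) * (real i + x)^2)"
  unfolding gau_def by (simp add: algebra_simps)

lemma summable_gau1: "T > 0 \<Longrightarrow> summable (\<lambda>i::nat. gau T (real i + x))"
  unfolding gau_pos_shift by (rule summable_gauss_nat) simp
lemma summable_gau2: "T > 0 \<Longrightarrow> summable (\<lambda>i::nat. gau T (x - real i - 1))"
  unfolding gau_neg_shift by (rule summable_gauss_nat) simp

definition Fp :: "real \<Rightarrow> real \<Rightarrow> real" where
  "Fp T x = (\<Sum>i. gau T (real i + x) + gau T (x - real i - 1))"

lemma Fp_sums: "T > 0 \<Longrightarrow> (\<lambda>i. gau T (real i + x) + gau T (x - real i - 1)) sums Fp T x"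
  unfolding Fp_def by (intro summable_sums summable_add summable_gau1 summable_gau2)

lemma Fp_has_sum: assumes T: "T > 0" shows "((\<lambda>k::int. gau T (of_int k + x)) has_sum Fp T x) UNIV"
proof -
  have 1: "((\<lambda>i. gau T (of_int (int i) + x)) has_sum (\<Sum>i. gau T (real i + x))) UNIV"
    by (rule sums_nonneg_imp_has_sum) (auto intro!: summable_sums summable_gau1 T gau_nonneg)
  have eq: "(\<lambda>i. gau T (of_int (- int i - 1) + x)) = (\<lambda>i. gau T (x - real i - 1))"
    by (simp add: algebra_simps)
  have 2: "((\<lambda>i. gau T (of_int (- int i - 1) + x)) has_sum (\<Sum>i. gau T (x - real i - 1))) UNIV"
    unfolding eq by (rule sums_nonneg_imp_has_sum) (auto intro!: summable_sums summable_gau2 T gau_nonneg)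
  have "(\<Sum>i. gau T (real i + x)) + (\<Sum>i. gau T (x - real i - 1)) = Fp T x"
    unfolding Fp_def by (intro suminf_add summable_gau1 summable_gau2 T)
  with has_sum_int_split[OF 1 2] show ?thesis by simp
qed

lemma Fp_periodic: assumes T: "T > 0" shows "Fp T (x + 1) = Fp T x"
proof -
  have "((\<lambda>k::int. gau T (of_int k + (x + 1))) has_sum Fp T (x+1)) UNIV" by (rule Fp_has_sum[OF T])
  moreover have "((\<lambda>k::int. gau T (of_int k + (x + 1))) has_sum Fp T x) UNIV"
  proof -
    have "((\<lambda>k::int. gau T (of_int k + (x + 1))) has_sum Fp T x) UNIV = ((\<lambda>k::int. gau T (of_int k + x)) has_sum Fp T x) UNIV"
      by (rule has_sum_reindex_bij_witness[where j="\<lambda>k. k + 1" and i="\<lambda>k. k - 1"]) (auto simp: add_ac)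
    thus ?thesis using Fp_has_sum[OF T, of x] by simp
  qed
  ultimately show ?thesis using has_sum_unique by blast
qed

lemma u_bound:
  assumes T: "T > 0" and R: "\<bar>x\<bar> \<le> R"
  shows "norm (gau T (real i + x) + gau T (x - real i - 1)) \<le> (exp (pi * T * R^2) + exp (pi * T * (R+1)^2)) * exp (- (pi * T) / 2) ^ i"
proof -
  have c: "pi * T > 0" using T by simp
  have 1: "gau T (real i + x) \<le> exp (pi * T * R^2) * exp (- (pi * T) / 2) ^ i"
    unfolding gau_pos_shift by (rule gauss_nat_bound[OF c R])
  have R1: "\<bar>1 - x\<bar> \<le> R + 1" using R by linarith
  have 2: "gau T (x - real i - 1) \<le> exp (pi * T * (R+1)^2) * exp (- (pi * T) / 2) ^ i"
    unfolding gau_neg_shift by (rule gauss_nat_bound[OF c R1])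
  have "norm (gau T (real i + x) + gau T (x - real i - 1)) = gau T (real i + x) + gau T (x - real i - 1)"
    using gau_nonneg[of T] by (simp add: add_nonneg_nonneg)
  also have "\<dots> \<le> (exp (pi * T * R^2) + exp (pi * T * (R+1)^2)) * exp (- (pi * T) / 2) ^ i"
    using 1 2 by (simp add: distrib_right)
  finally show ?thesis .
qed

lemma summable_Mbound: "T > 0 \<Longrightarrow> summable (\<lambda>i::nat. C * exp (- (pi * T) / 2) ^ i)"
  by (intro summable_mult summable_geometric) simp

lemma continuous_gau: "continuous_on S (gau T)"
  unfolding gau_def by (intro continuous_intros)

lemma Fp_cont: assumes T: "T > 0" shows "continuous_on UNIV (Fp T)"
proof (rule continuous_at_imp_continuous_on, rule ballI)
  fix x :: real
  define R where "R = \<bar>x\<bar> + 1"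
  have ul: "uniform_limit (cball 0 R) (\<lambda>n x. \<Sum>i<n. gau T (real i + x) + gau T (x - real i - 1)) (Fp T) sequentially"
    unfolding Fp_def[abs_def]
    by (rule Weierstrass_m_test[OF u_bound[OF T] summable_Mbound[OF T]]) auto
  have "continuous_on (cball 0 R) (Fp T)"
    by (rule uniform_limit_theorem[OF _ ul])
       (auto intro!: always_eventually continuous_intros continuous_on_compose2[OF continuous_gau])
  moreover have "x \<in> interior (cball 0 R)" unfolding R_def by auto
  ultimately show "isCont (Fp T) x" by (rule continuous_on_interior)
qed

definition ee :: "int \<Rightarrow> real \<Rightarrow> complex" where
  "ee k x = exp (2 * pi * \<i> * of_int k * of_real x)"

lemma ee_shift: "ee k (x + of_int j) = ee k x"
proof -
  have "2 * pi * \<i> * of_int k * of_real (x + of_int j) = 2 * pi * \<i> * of_int k * of_real x + \<i> * (of_int (k*j) * (of_real pi * 2))"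
    by (simp add: algebra_simps)
  thus ?thesis unfolding ee_def by (simp only: exp_plus_2pin)
qed

lemma continuous_ee: "continuous_on S (ee k)"
  unfolding ee_def by (intro continuous_intros)

lemma integral_sym_split:
  fixes G :: "real \<Rightarrow> complex"
  assumes cG: "continuous_on UNIV G"
  shows "integral {- real n..real n} G = (\<Sum>i<n. integral {real i..real i + 1} G + integral {- real i - 1..- real i} G)"
proof (induction n)
  case 0 then show ?case by simp
next
  case (Suc n)
  have int: "G integrable_on {a..b}" for a b
    by (rule integrable_continuous_real) (rule continuous_on_subset[OF cG], simp)
  have "integral {- real (Suc n)..real (Suc n)} G = integral {- real (Suc n)..real n} G + integral {real n..real n + 1} G"
    using Henstock_Kurzweil_Integration.integral_combine[where a="- real (Suc n)" and c="real n" and b="real (Suc n)" and f=G] int by (simp add: add_ac)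
  also have "integral {- real (Suc n)..real n} G = integral {- 1 - real n..- real n} G + integral {- real n..real n} G"
    using Henstock_Kurzweil_Integration.integral_combine[where a="- real (Suc n)" and c="- real n" and b="real n" and f=G] int by (simp add: add_ac)
  moreover have e: "- 1 - real n = - real n - 1" by simp
  ultimately show ?case using Suc by (simp add: add_ac e)
qed

lemma tendsto_integral_sym:
  fixes G :: "real \<Rightarrow> complex"
  assumes iG: "integrable lborel G"
  shows "(\<lambda>n. integral {- real n..real n} G) \<longlonglongrightarrow> integral\<^sup>L lborel G"
proof -
  have meas: "G \<in> borel_measurable lborel" using iG by (rule borel_measurable_integrable)
  have si: "set_integrable lborel {- real n..real n} G" for n
    unfolding set_integrable_def by (rule integrable_mult_indicator[OF _ iG]) simp
  have eq: "integral {- real n..real n} G = (\<integral>x. indicator {- real n..real n} x *\<^sub>R G x \<partial>lborel)" for n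
    using set_borel_integral_eq_integral(2)[OF si[of n]] unfolding set_lebesgue_integral_def by simp
  have "(\<lambda>n. \<integral>x. indicator {- real n..real n} x *\<^sub>R G x \<partial>lborel) \<longlonglongrightarrow> integral\<^sup>L lborel G"
  proof (rule integral_dominated_convergence[where w="\<lambda>x. norm (G x)"])
    show "G \<in> borel_measurable lborel" by fact
    show "(\<lambda>x. indicator {- real n..real n} x *\<^sub>R G x) \<in> borel_measurable lborel" for n
      using meas by measurable
    show "integrable lborel (\<lambda>x. norm (G x))" using iG by (rule integrable_norm)
    show "AE x in lborel. (\<lambda>n. indicator {- real n..real n} x *\<^sub>R G x) \<longlonglongrightarrow> G x"
    proof (rule AE_I2)
      fix x :: real
      obtain N :: nat where N: "\<bar>x\<bar> \<le> real N" using real_arch_simple by blast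
      have "eventually (\<lambda>n. indicator {- real n..real n} x *\<^sub>R G x = G x) sequentially"
        using eventually_ge_at_top[of N]
        by eventually_elim (use N in \<open>auto simp: indicator_def\<close>)
      thus "(\<lambda>n. indicator {- real n..real n} x *\<^sub>R G x) \<longlonglongrightarrow> G x"
        by (rule tendsto_eventually)
    qed
    show "AE x in lborel. norm (indicator {- real n..real n} x *\<^sub>R G x) \<le> norm (G x)" for n
      by (auto simp: indicator_def)
  qed
  thus ?thesis by (simp add: eq)
qed

lemma Fp_coef:
  assumes T: "T > 0"
  shows "integral {0..1} (\<lambda>x. complex_of_real (Fp T x) * ee k x) = complex_of_real (exp (- pi * (of_int k)^2 / T) / sqrt T)"
proof -
  define Gc where "Gc y = complex_of_real (gau T y) * ee k y" for y
  have cGc: "continuous_on UNIV Gc" unfolding Gc_def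
    by (intro continuous_intros continuous_on_compose2[OF continuous_gau] continuous_ee) auto
  have Gc_eq: "Gc = (\<lambda>y. complex_of_real (exp (- pi * T * y^2)) * exp (2 * pi * \<i> * real_of_int k * y))"
    by (simp add: Gc_def ee_def gau_def fun_eq_iff)
  have iGc: "integrable lborel Gc" unfolding Gc_eq by (rule gauss_ft_lborel(1)[OF T])
  have vGc: "integral\<^sup>L lborel Gc = complex_of_real (exp (- pi * (of_int k)^2 / T) / sqrt T)"
    unfolding Gc_eq using gauss_ft_lborel(2)[OF T, of "real_of_int k"] by simp
  define v where "v i x = complex_of_real (gau T (real i + x) + gau T (x - real i - 1)) * ee k x" for i x
  have nee: "norm (ee k x) = 1" for x unfolding ee_def by (simp add: norm_exp_eq_Re)
  have ul: "uniform_limit {0..1} (\<lambda>n x. \<Sum>i<n. v i x) (\<lambda>x. \<Sum>i. v i x) sequentially"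
  proof (rule Weierstrass_m_test[OF _ summable_Mbound[OF T]])
    fix i x assume x: "x \<in> {0..(1::real)}"
    have "norm (v i x) = norm (gau T (real i + x) + gau T (x - real i - 1))"
      unfolding v_def norm_mult nee norm_of_real by simp
    also have "\<dots> \<le> (exp (pi * T * 1^2) + exp (pi * T * (1+1)^2)) * exp (- (pi * T) / 2) ^ i"
      by (rule u_bound[OF T]) (use x in auto)
    finally show "norm (v i x) \<le> (exp (pi * T * 1^2) + exp (pi * T * (1+1)^2)) * exp (- (pi * T) / 2) ^ i" .
  qed
  have vsum: "(\<Sum>i. v i x) = complex_of_real (Fp T x) * ee k x" for x
  proof -
    have "(\<lambda>i. complex_of_real (gau T (real i + x) + gau T (x - real i - 1))) sums complex_of_real (Fp T x)"
      using Fp_sums[OF T, of x] by (subst sums_of_real_iff)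
    from sums_mult2[OF this, of "ee k x"] show ?thesis unfolding v_def[abs_def] by (rule sums_unique[symmetric])
  qed
  have cv: "continuous_on {0..1} (v i)" for i unfolding v_def[abs_def]
    by (intro continuous_intros continuous_on_compose2[OF continuous_gau] continuous_ee) auto
  obtain I J where I: "\<And>n. ((\<lambda>x. \<Sum>i<n. v i x) has_integral I n) {0..1}"
    and J: "((\<lambda>x. \<Sum>i. v i x) has_integral J) {0..1}" and IJ: "I \<longlonglongrightarrow> J"
    using uniform_limit_integral[OF ul] cv by (auto intro!: continuous_intros)
  have vi: "integral {0..1} (v i) = integral {real i..real i + 1} Gc + integral {- real i - 1..- real i} Gc" for i
  proof -
    have e1: "ee k (x + real i) = ee k x" for x using ee_shift[of k x "int i"] by simp
    have e2: "ee k (x + (- real i - 1)) = ee k x" for x using ee_shift[of k x "- int i - 1"] by simp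
    have veq: "v i = (\<lambda>x. (Gc \<circ> (\<lambda>x. x + real i)) x + (Gc \<circ> (\<lambda>x. x + (- real i - 1))) x)"
    proof (rule ext)
      fix x
      have a: "x + (- real i - 1) = x - real i - 1" by simp
      show "v i x = (Gc \<circ> (\<lambda>x. x + real i)) x + (Gc \<circ> (\<lambda>x. x + (- real i - 1))) x"
        unfolding o_def Gc_def a v_def using e1[of x] e2[of x] unfolding a
        by (simp add: distrib_right add_ac)
    qed
    have c1: "continuous_on {0..1} (Gc \<circ> (\<lambda>x. x + c))" for c
      by (intro continuous_on_compose continuous_intros continuous_on_subset[OF cGc]) auto
    have "integral {0..1} (v i) = integral {0..1} (Gc \<circ> (\<lambda>x. x + real i)) + integral {0..1} (Gc \<circ> (\<lambda>x. x + (- real i - 1)))"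
      unfolding veq by (intro integral_add integrable_continuous_real c1)
    also have "\<dots> = integral {0 + real i..1 + real i} Gc + integral {0 + (- real i - 1)..1 + (- real i - 1)} Gc"
      by (intro arg_cong2[where f="(+)"] integral_shift continuous_on_subset[OF cGc]) auto
    finally show ?thesis by (simp add: add_ac)
  qed
  have In: "I n = integral {- real n..real n} Gc" for n
  proof -
    have "I n = integral {0..1} (\<lambda>x. \<Sum>i<n. v i x)" using I[of n] by (simp add: integral_unique)
    also have "\<dots> = (\<Sum>i<n. integral {0..1} (v i))"
      by (intro integral_sum integrable_continuous_real cv) auto
    also have "\<dots> = integral {- real n..real n} Gc"
      unfolding vi integral_sym_split[OF cGc] ..
    finally show ?thesis .
  qed
  have "I \<longlonglongrightarrow> integral\<^sup>L lborel Gc" unfolding In[abs_def] by (rule tendsto_integral_sym[OF iGc])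
  hence "J = integral\<^sup>L lborel Gc" using IJ LIMSEQ_unique by blast
  moreover have "integral {0..1} (\<lambda>x. complex_of_real (Fp T x) * ee k x) = J"
    using J unfolding vsum by (simp add: integral_unique)
  ultimately show ?thesis using vGc by simp
qed

lemma ee_mult: "ee a x * ee b x = ee (a + b) x"
  unfolding ee_def by (simp add: exp_add[symmetric] distrib_left distrib_right)

lemma ee_integral: "integral {0..1} (ee j) = (if j = 0 then 1 else 0)"
proof (cases "j = 0")
  case True
  have "ee 0 = (\<lambda>x. 1)" by (simp add: ee_def fun_eq_iff)
  then show ?thesis using True by simp
next
  case False
  define c :: complex where "c = 2 * pi * \<i> * of_int j"
  have c0: "c \<noteq> 0" using False by (simp add: c_def)
  have eeF: "ee j x = exp (c * of_real x)" for x by (simp add: ee_def c_def)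
  have "((\<lambda>x. exp (c * of_real x) / c) has_vector_derivative ee j x) (at x within {0..1})" for x
  proof -
    have "((\<lambda>z. exp (c * z) / c) has_field_derivative exp (c * of_real x)) (at (of_real x))"
      by (auto intro!: derivative_eq_intros simp: c0)
    from has_vector_derivative_real_field[OF this] show ?thesis by (simp add: eeF)
  qed
  hence "((ee j) has_integral (exp (c * of_real 1) / c - exp (c * of_real 0) / c)) {0..1}"
    by (intro fundamental_theorem_of_calculus) auto
  moreover have "exp (c * of_real 1) = 1" using ee_shift[of j 0 1] by (simp add: eeF)
  ultimately show ?thesis using False by (simp add: integral_unique)
qed

definition cw :: "real \<Rightarrow> real \<Rightarrow> int \<Rightarrow> real" where
  "cw T x w = exp (- pi * (of_int w)^2 / T) * cos (2 * pi * of_int w * x)"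

lemma cw_periodic: "cw T (x + 1) w = cw T x w"
proof -
  have "cos (2 * pi * of_int w * (x + 1)) = cos (2 * pi * of_int w * x + (2 * pi) * of_int w)"
    by (simp add: algebra_simps)
  also have "\<dots> = cos (2 * pi * of_int w * x)" by (simp only: cos_add cos_int_2pin sin_int_2pin) simp?
  finally show ?thesis by (simp add: cw_def)
qed

lemma cw_coef: "integral {0..1} (\<lambda>x. complex_of_real (cw T x w) * ee k x)
   = complex_of_real (exp (- pi * (of_int w)^2 / T)) * ((if w + k = 0 then 1 else 0) + (if k - w = 0 then 1 else 0)) / 2"
proof -
  have cosee: "complex_of_real (cos (2 * pi * of_int w * x)) = (ee w x + ee (- w) x) / 2" for x
    unfolding ee_def cos_of_real[symmetric] cos_exp_eq by (simp add: mult_ac)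
  have eq: "(\<lambda>x. complex_of_real (cw T x w) * ee k x) = (\<lambda>x. (complex_of_real (exp (- pi * (of_int w)^2 / T)) / 2) * (ee (w + k) x + ee (k - w) x))"
  proof (rule ext)
    fix x
    have m1: "ee w x * ee k x = ee (w + k) x" by (simp add: ee_mult)
    have m2: "ee (-w) x * ee k x = ee (k - w) x" by (simp add: ee_mult)
    show "complex_of_real (cw T x w) * ee k x = (complex_of_real (exp (- pi * (of_int w)^2 / T)) / 2) * (ee (w + k) x + ee (k - w) x)"
      unfolding cw_def of_real_mult cosee m1[symmetric] m2[symmetric] by (simp add: algebra_simps)
  qed
  have i: "ee a integrable_on {0..1}" for a by (intro integrable_continuous_real continuous_ee)
  show ?thesis unfolding eq
    by (simp add: integral_add i ee_integral)
qed

lemma cw_bound: "\<bar>cw T x w\<bar> \<le> exp (- pi * (of_int w)^2 / T)"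
proof -
  have "exp (- pi * (of_int w)^2 / T) * \<bar>cos (2 * pi * of_int w * x)\<bar> \<le> exp (- pi * (of_int w)^2 / T) * 1"
    by (intro mult_left_mono abs_cos_le_one) auto
  thus ?thesis unfolding cw_def abs_mult by simp
qed

lemma cw_bound1: "\<bar>cw T x (int i)\<bar> \<le> exp (- (pi / T) * (real i + 0)^2)"
  using cw_bound[of T x "int i"] by simp

lemma cw_bound2: "\<bar>cw T x (- int i - 1)\<bar> \<le> exp (- (pi / T) * (real i + 1)^2)"
proof -
  have "(of_int (- int i - 1) :: real)^2 = (real i + 1)^2" by (simp add: power2_eq_square algebra_simps)
  thus ?thesis using cw_bound[of T x "- int i - 1"] by simp
qed

lemma summable_cwM: "T > 0 \<Longrightarrow> summable (\<lambda>i::nat. exp (- (pi / T) * (real i + 0)^2) + exp (- (pi / T) * (real i + 1)^2))"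
  by (intro summable_add summable_gauss_nat) auto

definition Gd :: "real \<Rightarrow> real \<Rightarrow> real" where
  "Gd T x = (1 / sqrt T) * (\<Sum>i. cw T x (int i) + cw T x (- int i - 1))"

lemma cw_norm_bound: "norm (cw T x (int i) + cw T x (- int i - 1)) \<le> exp (- (pi / T) * (real i + 0)^2) + exp (- (pi / T) * (real i + 1)^2)"
  using cw_bound1[of T x i] cw_bound2[of T x i] by simp

lemma cw_summable: "T > 0 \<Longrightarrow> summable (\<lambda>i. cw T x (int i) + cw T x (- int i - 1))"
  by (rule summable_comparison_test[OF _ summable_cwM]) (use cw_norm_bound in auto)

lemma continuous_cw: "continuous_on S (\<lambda>x. cw T x w)"
  unfolding cw_def by (intro continuous_intros)

lemma Gd_cont: assumes T: "T > 0" shows "continuous_on UNIV (Gd T)"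
proof -
  have ul: "uniform_limit UNIV (\<lambda>n x. \<Sum>i<n. cw T x (int i) + cw T x (- int i - 1)) (\<lambda>x. \<Sum>i. cw T x (int i) + cw T x (- int i - 1)) sequentially"
    by (rule Weierstrass_m_test[OF cw_norm_bound summable_cwM[OF T]])
  have "continuous_on UNIV (\<lambda>x. \<Sum>i. cw T x (int i) + cw T x (- int i - 1))"
    by (rule uniform_limit_theorem[OF _ ul]) (auto intro!: always_eventually continuous_intros continuous_cw)
  thus ?thesis unfolding Gd_def[abs_def] by (intro continuous_intros)
qed

lemma Gd_periodic: "Gd T (x + 1) = Gd T x"
  by (simp add: Gd_def cw_periodic)

lemma sum_int_sym: "(\<Sum>i<n. h (int i) + h (- int i - 1)) = sum h {- int n..<int n}"
proof (induction n)
  case 0 then show ?case by simp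
next
  case (Suc n)
  have "{- int (Suc n)..<int (Suc n)} = insert (- int n - 1) (insert (int n) {- int n..<int n})" by auto
  hence "sum h {- int (Suc n)..<int (Suc n)} = h (- int n - 1) + (h (int n) + sum h {- int n..<int n})"
    by simp
  then show ?case using Suc by (simp add: add_ac)
qed

lemma Gd_coef:
  assumes T: "T > 0"
  shows "integral {0..1} (\<lambda>x. complex_of_real (Gd T x) * ee k x) = complex_of_real (exp (- pi * (of_int k)^2 / T) / sqrt T)"
proof -
  define v where "v i x = complex_of_real (cw T x (int i) + cw T x (- int i - 1)) * ee k x" for i x
  have nee: "norm (ee k x) = 1" for x unfolding ee_def by (simp add: norm_exp_eq_Re)
  have ul: "uniform_limit {0..1} (\<lambda>n x. \<Sum>i<n. v i x) (\<lambda>x. \<Sum>i. v i x) sequentially"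
  proof (rule Weierstrass_m_test[OF _ summable_cwM[OF T]])
    fix i x
    show "norm (v i x) \<le> exp (- (pi / T) * (real i + 0)^2) + exp (- (pi / T) * (real i + 1)^2)"
      unfolding v_def norm_mult nee norm_of_real using cw_norm_bound[of T x i] by simp
  qed
  define S where "S x = (\<Sum>i. cw T x (int i) + cw T x (- int i - 1))" for x
  have vsum: "(\<Sum>i. v i x) = complex_of_real (S x) * ee k x" for x
  proof -
    have "(\<lambda>i. complex_of_real (cw T x (int i) + cw T x (- int i - 1))) sums complex_of_real (S x)"
      unfolding S_def using summable_sums[OF cw_summable[OF T, of x]] by (subst sums_of_real_iff)
    from sums_mult2[OF this, of "ee k x"] show ?thesis unfolding v_def[abs_def] by (rule sums_unique[symmetric])
  qed
  have cv: "continuous_on {0..1} (v i)" for i unfolding v_def[abs_def]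
    by (intro continuous_intros continuous_cw continuous_ee)
  obtain I J where I: "\<And>n. ((\<lambda>x. \<Sum>i<n. v i x) has_integral I n) {0..1}"
    and J: "((\<lambda>x. \<Sum>i. v i x) has_integral J) {0..1}" and IJ: "I \<longlonglongrightarrow> J"
    using uniform_limit_integral[OF ul] cv by (auto intro!: continuous_intros)
  define c where "c w = integral {0..1} (\<lambda>x. complex_of_real (cw T x w) * ee k x)" for w
  define E where "E = complex_of_real (exp (- pi * (of_int k)^2 / T))"
  have ci: "(\<lambda>x. complex_of_real (cw T x w) * ee k x) integrable_on {0..1}" for w
    by (intro integrable_continuous_real continuous_intros continuous_cw continuous_ee)
  have In: "I n = sum c {- int n..<int n}" for n
  proof -
    have "I n = integral {0..1} (\<lambda>x. \<Sum>i<n. v i x)" using I[of n] by (simp add: integral_unique)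
    also have "\<dots> = (\<Sum>i<n. integral {0..1} (v i))"
      by (intro integral_sum integrable_continuous_real cv) auto
    also have "\<dots> = (\<Sum>i<n. c (int i) + c (- int i - 1))"
      unfolding v_def c_def of_real_add distrib_right by (intro sum.cong refl integral_add ci)
    finally show ?thesis by (simp add: sum_int_sym)
  qed
  have Ev: "eventually (\<lambda>n. I n = E) sequentially"
    using eventually_ge_at_top[of "nat \<bar>k\<bar> + 1"]
  proof eventually_elim
    case (elim n)
    have kin: "k \<in> {- int n..<int n}" "- k \<in> {- int n..<int n}" using elim by auto
    have ceq: "c w = (if w = - k then E / 2 else 0) + (if w = k then E / 2 else 0)" for w
    proof -
      have sq: "(real_of_int (- k))^2 = (real_of_int k)^2" by simp
      show ?thesis
      proof (cases "w = k")
        case True then show ?thesis unfolding c_def cw_coef E_def by auto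
      next
        case False
        show ?thesis
        proof (cases "w = - k")
          case True then show ?thesis using False unfolding c_def cw_coef E_def sq by auto
        next
          case False2: False
          then have "w + k \<noteq> 0" "k - w \<noteq> 0" using False by auto
          then show ?thesis using False False2 unfolding c_def cw_coef E_def by auto
        qed
      qed
    qed
    have "I n = (\<Sum>w\<in>{- int n..<int n}. (if w = - k then E / 2 else 0)) + (\<Sum>w\<in>{- int n..<int n}. (if w = k then E / 2 else 0))"
      unfolding In ceq by (rule sum.distrib)
    also have "\<dots> = E" using kin by (simp add: sum.delta')
    finally show ?case .
  qed
  have "I \<longlonglongrightarrow> E" using tendsto_eventually[OF Ev] .
  hence JE: "J = E" using IJ LIMSEQ_unique by blast
  have "integral {0..1} (\<lambda>x. complex_of_real (S x) * ee k x) = E"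
    using J JE unfolding vsum by (simp add: integral_unique)
  moreover have "(\<lambda>x. complex_of_real (Gd T x) * ee k x) = (\<lambda>x. complex_of_real (1 / sqrt T) * (complex_of_real (S x) * ee k x))"
    by (simp add: fun_eq_iff Gd_def S_def)
  moreover have "(\<lambda>x. complex_of_real (S x) * ee k x) integrable_on {0..1}"
    using J unfolding vsum by blast
  ultimately show ?thesis unfolding E_def
    by (simp add: integral_mult_right integral_mult_left)
qed

lemma periodic_int:
  assumes per: "\<And>x. f (x + 1) = (f x :: real)"
  shows "f (x + of_int n) = f x"
proof (induction n rule: int_induct[where k=0])
  case base then show ?case by simp
next
  case (step1 i) then show ?case using per[of "x + of_int i"] by (simp add: add_ac)
next
  case (step2 i) then show ?case using per[of "x + of_int (i - 1)"] by (simp add: add_ac)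
qed

lemma Fp_eq_Gd: assumes T: "T > 0" shows "Fp T x = Gd T x"
proof -
  define d where "d x = Fp T x - Gd T x" for x
  have cd: "continuous_on UNIV d" unfolding d_def[abs_def]
    by (intro continuous_intros Fp_cont Gd_cont T)
  have pd: "d (x + 1) = d x" for x unfolding d_def by (simp add: Fp_periodic[OF T] Gd_periodic)
  have coef: "integral {0..1} (\<lambda>x. complex_of_real (d x) * exp (2 * pi * \<i> * of_int k * x)) = 0" for k :: int
  proof -
    have i1: "(\<lambda>x. complex_of_real (Fp T x) * ee k x) integrable_on {0..1}"
      by (intro integrable_continuous_real continuous_intros continuous_ee continuous_on_subset[OF Fp_cont[OF T]]) auto
    have i2: "(\<lambda>x. complex_of_real (Gd T x) * ee k x) integrable_on {0..1}"
      by (intro integrable_continuous_real continuous_intros continuous_ee continuous_on_subset[OF Gd_cont[OF T]]) auto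
    have "(\<lambda>x. complex_of_real (d x) * exp (2 * pi * \<i> * of_int k * x)) = (\<lambda>x. complex_of_real (Fp T x) * ee k x - complex_of_real (Gd T x) * ee k x)"
      by (simp add: fun_eq_iff d_def ee_def left_diff_distrib)
    thus ?thesis using integral_diff[OF i1 i2] Fp_coef[OF T, of k] Gd_coef[OF T, of k] by simp
  qed
  have d01: "d y = 0" if "y \<in> {0..1}" for y by (rule fourier_unique[OF cd pd coef that])
  have "d x = d (frac x + of_int \<lfloor>x\<rfloor>)" by (simp add: frac_def)
  also have "\<dots> = d (frac x)" by (rule periodic_int[where f=d, OF pd])
  also have "\<dots> = 0" by (rule d01) (auto simp: frac_lt_1 less_imp_le)
  finally show ?thesis unfolding d_def by simp
qed

lemma poisson_cw:
  assumes T: "T > 0"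
  shows "((\<lambda>w::int. cw T x w) has_sum (sqrt T * Fp T x)) UNIV"
proof -
  have s1: "summable (\<lambda>i. norm (cw T x (int i)))"
    by (rule summable_comparison_test[OF _ summable_gauss_nat[of "pi / T" 0]]) (use cw_bound1 T in auto)
  have s2: "summable (\<lambda>i. norm (cw T x (- int i - 1)))"
    by (rule summable_comparison_test[OF _ summable_gauss_nat[of "pi / T" 1]]) (use cw_bound2 T in auto)
  have h1: "((\<lambda>i. cw T x (int i)) has_sum (\<Sum>i. cw T x (int i))) UNIV"
    by (rule norm_summable_imp_has_sum[OF s1 summable_sums[OF summable_norm_cancel[OF s1]]])
  have h2: "((\<lambda>i. cw T x (- int i - 1)) has_sum (\<Sum>i. cw T x (- int i - 1))) UNIV"
    by (rule norm_summable_imp_has_sum[OF s2 summable_sums[OF summable_norm_cancel[OF s2]]])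
  have "(\<Sum>i. cw T x (int i)) + (\<Sum>i. cw T x (- int i - 1)) = (\<Sum>i. cw T x (int i) + cw T x (- int i - 1))"
    by (rule suminf_add[OF summable_norm_cancel[OF s1] summable_norm_cancel[OF s2]])
  also have "\<dots> = sqrt T * Gd T x" unfolding Gd_def using T by simp
  also have "\<dots> = sqrt T * Fp T x" using Fp_eq_Gd[OF T] by simp
  finally show ?thesis using has_sum_int_split[OF h1 h2] by simp
qed




lemma key_alg:
  fixes K L K2 L2 M N P t1 t2 pp :: complex
  assumes P: "P \<noteq> 0"
  shows "- 4 * pp * \<i> * M * N / (2*P)
     + (pp * \<i> * (K + N/(2*P))^2 * (\<i> * (2*P) / 2) + 2 * pp * \<i> * (K + N/(2*P)) * (t1 + M/2))
     + (pp * \<i> * (L + N/(2*P))^2 * (\<i> * (2*P) / 2) + 2 * pp * \<i> * (L + N/(2*P)) * (- t1 + M/2))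
     + (pp * \<i> * (K2 + M/(2*P))^2 * (\<i> * (2*P) / 2) + 2 * pp * \<i> * (K2 + M/(2*P)) * (t2 + N/2))
     + (pp * \<i> * (L2 + M/(2*P))^2 * (\<i> * (2*P) / 2) + 2 * pp * \<i> * (L2 + M/(2*P)) * (- t2 + N/2))
   = (2 * pp * \<i> * t1 * (K - L) - pp * (2*P) * (K - L)^2 / 4 - pp * (P*(K2+L2)+M)^2 / (2*P) + pp * \<i> * (K - L) * (P*(K2+L2)+M))
     + (2 * pp * \<i> * t2 * (K2 - L2) - pp * (2*P) * (K2 - L2)^2 / 4 - pp * (P*(K+L)+N)^2 / (2*P) + pp * \<i> * (K2 - L2) * (P*(K+L)+N))
     + \<i> * ((M * L + N * L2 - P * (K * K2 - L * L2)) * (pp * 2))"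
  using P by (simp add: field_simps power2_eq_square)

lemma has_sum_prod_c:
  fixes f :: "'a \<Rightarrow> complex" and g :: "'b \<Rightarrow> complex"
  assumes fa: "(f has_sum a) A" and gb: "(g has_sum b) B"
  shows "((\<lambda>(x,y). f x * g y) has_sum (a * b)) (A \<times> B)"
proof -
  have fs: "(\<lambda>x. norm (f x)) summable_on A" using fa summable_on_iff_abs_summable_on_complex by (auto simp: summable_on_def)
  have gs: "(\<lambda>x. norm (g x)) summable_on B" using gb summable_on_iff_abs_summable_on_complex by (auto simp: summable_on_def)
  have "(\<lambda>z. norm (case z of (x,y) \<Rightarrow> f x * g y)) summable_on Sigma A (\<lambda>_. B)"
  proof (rule Infinite_Sum.abs_summable_on_Sigma_iff[where f="\<lambda>(x,y). f x * g y", THEN iffD2], intro conjI ballI)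
    fix x assume "x \<in> A"
    show "(\<lambda>y. norm (case (x, y) of (x, y) \<Rightarrow> f x * g y)) summable_on B"
      using summable_on_cmult_right[OF gs, of "norm (f x)"] by (simp add: norm_mult)
  next
    have eqf: "infsum (\<lambda>y. norm (f x * g y)) B = norm (f x) * infsum (\<lambda>y. norm (g y)) B" for x
      unfolding norm_mult by (intro infsum_cmult_right) (use gs in auto)
    have sm: "(\<lambda>x. norm (norm (f x) * infsum (\<lambda>y. norm (g y)) B)) summable_on A"
    proof -
      have "(\<lambda>x. norm (f x) * infsum (\<lambda>y. norm (g y)) B) summable_on A"
        by (rule summable_on_cmult_left[OF fs])
      moreover have "norm (norm (f x) * infsum (\<lambda>y. norm (g y)) B) = norm (f x) * infsum (\<lambda>y. norm (g y)) B" for x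
        by (simp add: infsum_nonneg)
      ultimately show ?thesis by simp
    qed
    show "(\<lambda>x. norm (infsum (\<lambda>y. norm (case (x, y) of (x, y) \<Rightarrow> f x * g y)) B)) summable_on A"
      unfolding prod.case eqf using sm .
  qed
  hence summ: "(\<lambda>(x,y). f x * g y) summable_on Sigma A (\<lambda>_. B)" by (rule abs_summable_summable)
  show ?thesis
  proof (rule has_sum_SigmaI[OF _ _ summ])
    fix x assume "x \<in> A"
    show "((\<lambda>y. case (x, y) of (x, y) \<Rightarrow> f x * g y) has_sum f x * b) B"
      using has_sum_cmult_right[OF gb, of "f x"] by simp
  next
    show "((\<lambda>x. f x * b) has_sum a * b) A" by (rule has_sum_cmult_left[OF fa])
  qed
qed

definition tt :: "nat \<Rightarrow> real \<Rightarrow> real \<Rightarrow> real \<Rightarrow> int \<Rightarrow> complex" where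
  "tt q a b s k = exp (pi * \<i> * (of_int k + of_real a)^2 * (\<i> * of_nat q / 2)
                      + 2 * pi * \<i> * (of_int k + of_real a) * (of_real s + of_real b))"

lemma theta_char_tt: "theta_char a b (of_real s) (\<i> * of_nat q / 2) = infsum (tt q a b s) UNIV"
  unfolding theta_char_def tt_def ..

lemma norm_tt: "norm (tt q a b s k) = gau (real q / 2) (of_int k + a)"
proof -
  define r where "r = of_int k + a"
  have "pi * \<i> * (of_int k + of_real a)^2 * (\<i> * of_nat q / 2) + 2 * pi * \<i> * (of_int k + of_real a) * (of_real s + of_real b)
      = complex_of_real (- pi * (real q / 2) * r^2) + \<i> * complex_of_real (2 * pi * r * (s + b))"
    unfolding r_def by (simp add: algebra_simps power2_eq_square)
  thus ?thesis unfolding tt_def gau_def r_def by (simp add: norm_exp_eq_Re)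
qed

lemma tt_has_sum:
  assumes q: "q > 0"
  shows "(tt q a b s has_sum theta_char a b (of_real s) (\<i> * of_nat q / 2)) UNIV"
proof -
  have "((\<lambda>k. norm (tt q a b s k)) has_sum Fp (real q / 2) a) UNIV"
    unfolding norm_tt by (rule Fp_has_sum) (use q in simp)
  hence "(\<lambda>k. norm (tt q a b s k)) summable_on UNIV" by (auto simp: summable_on_def)
  hence "tt q a b s summable_on UNIV" by (rule abs_summable_summable)
  thus ?thesis unfolding theta_char_tt by (rule has_sum_infsum)
qed

definition At :: "nat \<Rightarrow> real \<Rightarrow> int \<Rightarrow> int \<Rightarrow> complex" where
  "At q t u w = exp (2 * pi * \<i> * of_real t * of_int u - pi * of_nat q * (of_int u)^2 / 4
                    - pi * (of_int w)^2 / of_nat q + pi * \<i> * of_int u * of_int w)"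

lemma psi_eq:
  assumes q: "q = 2 * p" and p: "p > 0"
  shows "exp (- 4 * pi * \<i> * of_nat m * of_nat n / of_nat q)
     * tt q (real n / real q) (real m / 2) t1 k * tt q (real n / real q) (real m / 2) (- t1) l
     * tt q (real m / real q) (real n / 2) t2 k2 * tt q (real m / real q) (real n / 2) (- t2) l2
   = At q t1 (k - l) (int p * (k2 + l2) + int m) * At q t2 (k2 - l2) (int p * (k + l) + int n)"
proof -
  define NN where "NN = int m * l + int n * l2 - int p * (k * k2 - l * l2)"
  have eq: "- 4 * pi * \<i> * of_nat m * of_nat n / of_nat q
     + (pi * \<i> * (of_int k + of_real (real n / real q))^2 * (\<i> * of_nat q / 2) + 2 * pi * \<i> * (of_int k + of_real (real n / real q)) * (of_real t1 + of_real (real m / 2)))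
     + (pi * \<i> * (of_int l + of_real (real n / real q))^2 * (\<i> * of_nat q / 2) + 2 * pi * \<i> * (of_int l + of_real (real n / real q)) * (of_real (- t1) + of_real (real m / 2)))
     + (pi * \<i> * (of_int k2 + of_real (real m / real q))^2 * (\<i> * of_nat q / 2) + 2 * pi * \<i> * (of_int k2 + of_real (real m / real q)) * (of_real t2 + of_real (real n / 2)))
     + (pi * \<i> * (of_int l2 + of_real (real m / real q))^2 * (\<i> * of_nat q / 2) + 2 * pi * \<i> * (of_int l2 + of_real (real m / real q)) * (of_real (- t2) + of_real (real n / 2)))
   = (2 * pi * \<i> * of_real t1 * of_int (k - l) - pi * of_nat q * (of_int (k - l))^2 / 4
                    - pi * (of_int (int p * (k2 + l2) + int m))^2 / of_nat q + pi * \<i> * of_int (k - l) * of_int (int p * (k2 + l2) + int m))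
     + (2 * pi * \<i> * of_real t2 * of_int (k2 - l2) - pi * of_nat q * (of_int (k2 - l2))^2 / 4
                    - pi * (of_int (int p * (k + l) + int n))^2 / of_nat q + pi * \<i> * of_int (k2 - l2) * of_int (int p * (k + l) + int n))
     + \<i> * (of_int NN * (of_real pi * 2))"
    using key_alg[of "of_nat p" "complex_of_real pi" "of_nat m" "of_nat n" "of_int k" t1 "of_int l" "of_int k2" t2 "of_int l2"] p
    unfolding q NN_def by (simp add: algebra_simps)
  show ?thesis
    unfolding tt_def At_def mult_exp_exp eq exp_plus_2pin ..
qed

definition Eu :: "nat \<Rightarrow> real \<Rightarrow> int \<Rightarrow> complex" where
  "Eu q t u = exp (complex_of_real (- pi * real q * (of_int u)^2 / 4) + \<i> * complex_of_real (2 * pi * t * of_int u))"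

lemma norm_Eu: "norm (Eu q t u) = exp (- pi * real q * (of_int u)^2 / 4)"
  unfolding Eu_def by (simp add: norm_exp_eq_Re)

lemma tt_pair: "tt q 0 0 t (u + j) * tt q 0 0 t (- j) = Eu q t u * complex_of_real (gau (real q) (of_int j + of_int u / 2))"
  unfolding tt_def Eu_def gau_def exp_of_real[symmetric] mult_exp_exp
  by (rule arg_cong[where f=exp]) (simp add: algebra_simps power2_eq_square)

lemma cos_half_int: "complex_of_real (cos (2 * pi * of_int w * (of_int u / 2))) = exp (\<i> * complex_of_real (pi * of_int (u * w)))"
proof -
  have h: "2 * pi * of_int w * (of_int u / 2) = pi * of_int (u * w)" by (simp add: algebra_simps)
  have "complex_of_real (cos (2 * pi * of_int w * (of_int u / 2))) = complex_of_real (cos (pi * of_int (u * w)))" unfolding h ..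
  also have "\<dots> = cis (pi * of_int (u * w))" using sin_npi_int[of "u * w"] by (simp add: complex_eq_iff)
  also have "\<dots> = exp (\<i> * complex_of_real (pi * of_int (u * w)))" by (simp add: cis_conv_exp)
  finally show ?thesis .
qed

lemma At_cw: "At q t u w = Eu q t u * complex_of_real (cw (real q) (of_int u / 2) w)"
proof -
  have cweq: "complex_of_real (cw (real q) (of_int u / 2) w) = exp (complex_of_real (- pi * (of_int w)^2 / real q) + \<i> * complex_of_real (pi * of_int (u * w)))"
    unfolding cw_def of_real_mult cos_half_int exp_of_real[symmetric] mult_exp_exp ..
  show ?thesis unfolding At_def Eu_def cweq mult_exp_exp
    by (rule arg_cong[where f=exp]) (simp add: algebra_simps power2_eq_square)
qed

lemma gau_has_sum_c:
  assumes "T > 0"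
  shows "((\<lambda>k::int. complex_of_real (gau T (of_int k + x))) has_sum complex_of_real (Fp T x)) UNIV"
  by (rule has_sum_of_real[OF Fp_has_sum[OF assms]])

lemma At_has_sum:
  assumes q: "q > 0"
  shows "((\<lambda>(u,w). At q t u w) has_sum (complex_of_real (sqrt (real q)) * (theta (of_real t) (\<i> * of_nat q / 2))^2)) (UNIV \<times> UNIV)"
proof -
  define th where "th = theta (of_real t) (\<i> * of_nat q / 2)"
  have th0: "(tt q 0 0 t has_sum th) UNIV" unfolding th_def theta_def using tt_has_sum[OF q] by simp
  have pr: "((\<lambda>(a,b). tt q 0 0 t a * tt q 0 0 t b) has_sum (th * th)) (UNIV \<times> UNIV)"
    by (rule has_sum_prod_c[OF th0 th0])
  have pr2: "((\<lambda>(u,j). tt q 0 0 t (u + j) * tt q 0 0 t (- j)) has_sum (th * th)) (UNIV \<times> UNIV)"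
  proof -
    have "((\<lambda>(u,j). tt q 0 0 t (u + j) * tt q 0 0 t (- j)) has_sum (th * th)) (UNIV \<times> UNIV)
        = ((\<lambda>(a,b). tt q 0 0 t a * tt q 0 0 t b) has_sum (th * th)) (UNIV \<times> UNIV)"
      by (rule has_sum_reindex_bij_witness[where j="\<lambda>(u,j). (u + j, - j)" and i="\<lambda>(a,b). (a + b, - b)"]) auto
    thus ?thesis using pr by simp
  qed
  have qr: "real q > 0" using q by simp
  have inner1: "((\<lambda>j. case (u, j) of (u, j) \<Rightarrow> tt q 0 0 t (u + j) * tt q 0 0 t (- j)) has_sum (Eu q t u * complex_of_real (Fp (real q) (of_int u / 2)))) UNIV" for u
    using has_sum_cmult_right[OF gau_has_sum_c[OF qr, of "of_int u / 2"], of "Eu q t u"] by (simp add: tt_pair)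
  have outer1: "((\<lambda>u. Eu q t u * complex_of_real (Fp (real q) (of_int u / 2))) has_sum (th * th)) UNIV"
    using has_sum_SigmaD[OF pr2[unfolded Sigma_def[symmetric]] inner1] by simp
  have outer2: "((\<lambda>u. Eu q t u * complex_of_real (sqrt (real q) * Fp (real q) (of_int u / 2))) has_sum (complex_of_real (sqrt (real q)) * (th * th))) UNIV"
    using has_sum_cmult_right[OF outer1, of "complex_of_real (sqrt (real q))"] by (simp add: mult_ac)
  have inner2: "((\<lambda>w. case (u, w) of (u, w) \<Rightarrow> At q t u w) has_sum (Eu q t u * complex_of_real (sqrt (real q) * Fp (real q) (of_int u / 2)))) UNIV" for u
  proof -
    have "((\<lambda>w. complex_of_real (cw (real q) (of_int u / 2) w)) has_sum complex_of_real (sqrt (real q) * Fp (real q) (of_int u / 2))) UNIV"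
      by (rule has_sum_of_real[OF poisson_cw[OF qr]])
    from has_sum_cmult_right[OF this, of "Eu q t u"] show ?thesis by (simp add: At_cw)
  qed
  have summ: "(\<lambda>(u,w). At q t u w) summable_on (UNIV \<times> UNIV)"
  proof -
    have q4: "real q / 4 > 0" and q1: "1 / real q > 0" using q by auto
    have "((\<lambda>(u,w). complex_of_real (gau (real q / 4) (of_int u + 0)) * complex_of_real (gau (1 / real q) (of_int w + 0))) has_sum (complex_of_real (Fp (real q / 4) 0) * complex_of_real (Fp (1 / real q) 0))) (UNIV \<times> UNIV)"
      by (rule has_sum_prod_c[OF gau_has_sum_c[OF q4] gau_has_sum_c[OF q1]])
    hence "(\<lambda>(u,w). complex_of_real (gau (real q / 4) (of_int u + 0)) * complex_of_real (gau (1 / real q) (of_int w + 0))) summable_on (UNIV \<times> UNIV)"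
      by (auto simp: summable_on_def)
    hence s: "(\<lambda>z. norm (case z of (u,w) \<Rightarrow> complex_of_real (gau (real q / 4) (of_int u + 0)) * complex_of_real (gau (1 / real q) (of_int w + 0)))) summable_on (UNIV \<times> UNIV)"
      using summable_on_iff_abs_summable_on_complex by blast
    have "(\<lambda>z. norm (case z of (u,w) \<Rightarrow> At q t u w)) summable_on (UNIV \<times> UNIV)"
    proof (rule Infinite_Sum.abs_summable_on_comparison_test[OF s])
      fix z :: "int \<times> int" 
      obtain u w where z: "z = (u,w)" by force
      have "norm (At q t u w) \<le> norm (Eu q t u) * \<bar>cw (real q) (of_int u / 2) w\<bar>"
        unfolding At_cw norm_mult by simp
      also have "\<dots> \<le> exp (- pi * real q * (of_int u)^2 / 4) * exp (- pi * (of_int w)^2 / real q)"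
        unfolding norm_Eu by (intro mult_left_mono cw_bound) auto
      also have "\<dots> = norm (complex_of_real (gau (real q / 4) (of_int u + 0)) * complex_of_real (gau (1 / real q) (of_int w + 0)))"
        by (simp add: gau_def norm_mult)
      finally show "norm (case z of (u,w) \<Rightarrow> At q t u w) \<le> norm (case z of (u,w) \<Rightarrow> complex_of_real (gau (real q / 4) (of_int u + 0)) * complex_of_real (gau (1 / real q) (of_int w + 0)))"
        by (simp add: z)
    qed
    thus ?thesis using summable_on_iff_abs_summable_on_complex by blast
  qed
  have "((\<lambda>(u,w). At q t u w) has_sum (complex_of_real (sqrt (real q)) * (th * th))) (Sigma UNIV (\<lambda>_. UNIV))"
    by (rule has_sum_SigmaI[OF inner2 outer2]) (use summ in simp)
  thus ?thesis unfolding th_def by (simp add: power2_eq_square)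
qed

lemma divmod_aux:
  fixes Q x r :: int
  assumes "0 \<le> r" "r < Q"
  shows "(Q * x + r) div Q = x" "(Q * x + r) mod Q = r"
  using assms by (simp_all add: add.commute)

theorem mainTheorem12:
  fixes q :: nat and t1 t2 :: real
  assumes "even q" and "q \<ge> 2"
  shows "(\<Sum>m<q. \<Sum>n<q.
            exp (- 4 * pi * \<i> * of_nat m * of_nat n / of_nat q)
            * theta_char (real n / real q) (real m / 2) (of_real t1) (\<i> * of_nat q / 2)
            * theta_char (real n / real q) (real m / 2) (- of_real t1) (\<i> * of_nat q / 2)
            * theta_char (real m / real q) (real n / 2) (of_real t2) (\<i> * of_nat q / 2)
            * theta_char (real m / real q) (real n / 2) (- of_real t2) (\<i> * of_nat q / 2))
         = of_nat q * theta (of_real t1) (\<i> * of_nat q / 2) ^ 2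
                    * theta (of_real t2) (\<i> * of_nat q / 2) ^ 2"
proof -
  obtain p where q: "q = 2 * p" using assms(1) by (auto elim: evenE)
  have p: "p > 0" using assms(2) q by simp
  have q0: "q > 0" using p q by simp
  define tau where "tau = \<i> * of_nat q / 2"
  define c where "c m n = exp (- 4 * pi * \<i> * of_nat m * of_nat n / of_nat q)" for m n :: nat
  define TH where "TH m n = c m n
            * theta_char (real n / real q) (real m / 2) (of_real t1) tau
            * theta_char (real n / real q) (real m / 2) (of_real (- t1)) tau
            * theta_char (real m / real q) (real n / 2) (of_real t2) tau
            * theta_char (real m / real q) (real n / 2) (of_real (- t2)) tau" for m n
  define Psi where "Psi = (\<lambda>((m,n),(k,l,k2,l2)). c m n
      * tt q (real n / real q) (real m / 2) t1 k * tt q (real n / real q) (real m / 2) (- t1) l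
      * tt q (real m / real q) (real n / 2) t2 k2 * tt q (real m / real q) (real n / 2) (- t2) l2)"
  define A where "A = {..<q} \<times> {..<q}"
  define RHS where "RHS = of_nat q * theta (of_real t1) tau ^ 2 * theta (of_real t2) tau ^ 2"
  have H1: "(Psi has_sum RHS) (A \<times> UNIV)"
  proof -
    have pr: "((\<lambda>(x,y). (\<lambda>(u,w). At q t1 u w) x * (\<lambda>(u,w). At q t2 u w) y) has_sum
        ((complex_of_real (sqrt (real q)) * (theta (of_real t1) tau)^2) * (complex_of_real (sqrt (real q)) * (theta (of_real t2) tau)^2)))
        ((UNIV \<times> UNIV) \<times> (UNIV \<times> UNIV))"
      unfolding tau_def by (rule has_sum_prod_c[OF At_has_sum[OF q0] At_has_sum[OF q0]])
    have val: "(complex_of_real (sqrt (real q)) * (theta (of_real t1) tau)^2) * (complex_of_real (sqrt (real q)) * (theta (of_real t2) tau)^2) = RHS"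
    proof -
      have "complex_of_real (sqrt (real q)) * complex_of_real (sqrt (real q)) = of_nat q"
        by (simp flip: of_real_mult)
      thus ?thesis unfolding RHS_def by (simp add: mult_ac)
    qed
    have "(Psi has_sum RHS) (A \<times> UNIV) =
      ((\<lambda>(x,y). (\<lambda>(u,w). At q t1 u w) x * (\<lambda>(u,w). At q t2 u w) y) has_sum RHS) ((UNIV \<times> UNIV) \<times> (UNIV \<times> UNIV))"
    proof (rule has_sum_reindex_bij_witness[where
          j="\<lambda>((m,n),(k,l,k2,l2)). ((k - l, int p * (k2 + l2) + int m), (k2 - l2, int p * (k + l) + int n))"
      and i="\<lambda>((u,w1),(u1,w)). ((nat ((w1 - int p * u1) mod int q), nat ((w - int p * u) mod int q)),
               ((w - int p * u) div int q + u, (w - int p * u) div int q, (w1 - int p * u1) div int q + u1, (w1 - int p * u1) div int q))"])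
      fix a :: "(nat \<times> nat) \<times> (int \<times> int \<times> int \<times> int)" assume a: "a \<in> A \<times> UNIV"
      obtain m n k l k2 l2 where a': "a = ((m,n),(k,l,k2,l2))" by (metis prod.exhaust)
      have mn: "m < q" "n < q" using a unfolding a' A_def by auto
      have e1: "int p * (k + l) + int n - int p * (k - l) = int q * l + int n" by (simp add: q algebra_simps)
      have e2: "int p * (k2 + l2) + int m - int p * (k2 - l2) = int q * l2 + int m" by (simp add: q algebra_simps)
      have d1: "(int q * l + int n) div int q = l" "(int q * l + int n) mod int q = int n"
        using divmod_aux[of "int n" "int q" l] mn by auto
      have d2: "(int q * l2 + int m) div int q = l2" "(int q * l2 + int m) mod int q = int m"
        using divmod_aux[of "int m" "int q" l2] mn by auto
      have mm: "int m mod int q = int m" "int n mod int q = int n" using mn by (metis of_nat_mod mod_less)+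
      show "(\<lambda>((u,w1),(u1,w)). ((nat ((w1 - int p * u1) mod int q), nat ((w - int p * u) mod int q)),
               ((w - int p * u) div int q + u, (w - int p * u) div int q, (w1 - int p * u1) div int q + u1, (w1 - int p * u1) div int q)))
            ((\<lambda>((m,n),(k,l,k2,l2)). ((k - l, int p * (k2 + l2) + int m), (k2 - l2, int p * (k + l) + int n))) a) = a"
        unfolding a' by (simp add: e1 e2 d1 d2 mm)
      show "(\<lambda>(x,y). (\<lambda>(u,w). At q t1 u w) x * (\<lambda>(u,w). At q t2 u w) y)
            ((\<lambda>((m,n),(k,l,k2,l2)). ((k - l, int p * (k2 + l2) + int m), (k2 - l2, int p * (k + l) + int n))) a) = Psi a"
        unfolding a' Psi_def c_def using psi_eq[OF q p, of m n t1 k l t2 k2 l2] by simp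
    next
      fix b :: "(int \<times> int) \<times> (int \<times> int)" assume "b \<in> (UNIV \<times> UNIV) \<times> (UNIV \<times> UNIV)"
      obtain u w1 u1 w :: int where b': "b = ((u,w1),(u1,w))" by (metis prod.exhaust)
      have m1: "0 \<le> (w - int p * u) mod int q" "(w - int p * u) mod int q < int q" using q0 by auto
      have m2: "0 \<le> (w1 - int p * u1) mod int q" "(w1 - int p * u1) mod int q < int q" using q0 by auto
      show "(\<lambda>((u,w1),(u1,w)). ((nat ((w1 - int p * u1) mod int q), nat ((w - int p * u) mod int q)),
               ((w - int p * u) div int q + u, (w - int p * u) div int q, (w1 - int p * u1) div int q + u1, (w1 - int p * u1) div int q))) b
            \<in> A \<times> UNIV"
        unfolding b' A_def using m1 m2 by (auto simp: nat_less_iff)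
      have r1: "int p * ((w - int p * u) div int q + u + (w - int p * u) div int q) + (w - int p * u) mod int q = w"
      proof -
        have "int p * ((w - int p * u) div int q + u + (w - int p * u) div int q) + (w - int p * u) mod int q
            = (int q * ((w - int p * u) div int q) + (w - int p * u) mod int q) + int p * u"
          by (simp add: q algebra_simps)
        also have "\<dots> = w" by simp
        finally show ?thesis .
      qed
      have r2: "int p * ((w1 - int p * u1) div int q + u1 + (w1 - int p * u1) div int q) + (w1 - int p * u1) mod int q = w1"
      proof -
        have "int p * ((w1 - int p * u1) div int q + u1 + (w1 - int p * u1) div int q) + (w1 - int p * u1) mod int q
            = (int q * ((w1 - int p * u1) div int q) + (w1 - int p * u1) mod int q) + int p * u1"
          by (simp add: q algebra_simps)
        also have "\<dots> = w1" by simp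
        finally show ?thesis .
      qed
      show "(\<lambda>((m,n),(k,l,k2,l2)). ((k - l, int p * (k2 + l2) + int m), (k2 - l2, int p * (k + l) + int n)))
            ((\<lambda>((u,w1),(u1,w)). ((nat ((w1 - int p * u1) mod int q), nat ((w - int p * u) mod int q)),
               ((w - int p * u) div int q + u, (w - int p * u) div int q, (w1 - int p * u1) div int q + u1, (w1 - int p * u1) div int q))) b) = b"
        unfolding b' using m1 m2 r1 r2 by simp
    qed auto
    thus ?thesis using pr val by simp
  qed
  have H2: "((\<lambda>y. Psi (x, y)) has_sum TH (fst x) (snd x)) UNIV" if "x \<in> A" for x
  proof -
    obtain m n where x: "x = (m,n)" by force
    let ?T1 = "tt q (real n / real q) (real m / 2) t1" and ?T2 = "tt q (real n / real q) (real m / 2) (- t1)"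
    let ?T3 = "tt q (real m / real q) (real n / 2) t2" and ?T4 = "tt q (real m / real q) (real n / 2) (- t2)"
    have h1: "(?T1 has_sum theta_char (real n / real q) (real m / 2) (of_real t1) tau) UNIV"
      unfolding tau_def by (rule tt_has_sum[OF q0])
    have h2: "(?T2 has_sum theta_char (real n / real q) (real m / 2) (of_real (- t1)) tau) UNIV"
      unfolding tau_def by (rule tt_has_sum[OF q0])
    have h3: "(?T3 has_sum theta_char (real m / real q) (real n / 2) (of_real t2) tau) UNIV"
      unfolding tau_def by (rule tt_has_sum[OF q0])
    have h4: "(?T4 has_sum theta_char (real m / real q) (real n / 2) (of_real (- t2)) tau) UNIV"
      unfolding tau_def by (rule tt_has_sum[OF q0])
    note h34 = has_sum_prod_c[OF h3 h4]
    note h234 = has_sum_prod_c[OF h2 h34]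
    note h1234 = has_sum_prod_c[OF h1 h234]
    from has_sum_cmult_right[OF h1234, of "c m n"]
    show ?thesis unfolding x TH_def Psi_def
      by (simp add: mult_ac case_prod_beta)
  qed
  have H3: "((\<lambda>(m,n). TH m n) has_sum RHS) A"
  proof -
    have e: "(\<lambda>(m,n). TH m n) = (\<lambda>x. TH (fst x) (snd x))" by (auto simp: fun_eq_iff)
    show ?thesis unfolding e by (rule has_sum_SigmaD[OF H1 H2])
  qed
  have "finite A" unfolding A_def by simp
  hence "RHS = (\<Sum>(m,n)\<in>A. TH m n)" using H3 has_sum_finite has_sum_unique by blast
  also have "\<dots> = (\<Sum>m<q. \<Sum>n<q. TH m n)" unfolding A_def by (simp add: sum.cartesian_product)
  finally show ?thesis unfolding RHS_def TH_def c_def tau_def by simp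
qed


end
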